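(* Let $a,b,c,d\in\mathbb C$ with $a\notin\mathbb Z$ and $d\notin\{0,-1,-2,\dots\}$. Then, as an identity of formal power series in $x,y$, $$\mathrm H_{11}(a,b,c;d;x,y)={}_1F_1(a;d;x)\,F(b,c;1-a;-y)+\sum_{k=1}^\infty\sum_{l=1}^k\frac{(-1)^{k+l}(k-1)!}{(l-1)!\,l!\,(k-l)!}\,\frac{(b)_l(c)_l}{(1-a)_l(d)_k}\,x^ky^l\,{}_1F_1(a+k;d+k;x)\,F(b+l,c+l;1-a+l;-y).$$
   Context: Pochhammer symbol: $(\lambda)_k=\Gamma(\lambda+k)/\Gamma(\lambda)$ for every integer $k$ (possibly negative) whenever defined; $(\lambda)_0=1$. $F(a,b;c;x)=\sum_{k\ge0}\frac{(a)_k(b)_k}{(c)_k k!}x^k$, ${}_1F_1(a;c;x)=\sum_{k\ge0}\frac{(a)_k}{(c)_k k!}x^k$. Confluent Horn function $\mathrm H_{11}(a,b,c;d;x,y)=\sum_{p,q\ge0}\frac{(a)_{p-q}(b)_q(c)_q}{(d)_p\,p!\,q!}x^py^q$. All functions are regarded as formal power series in $x,y$; the infinite double sum converges in the formal (degree) topology. *)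

theory Defs
  imports Complex_Main
begin

text \<open>Formal power series in two variables x, y with complex coefficients,
represented by their coefficient functions: f p q is the coefficient of x^p y^q.\<close>

type_synonym fps2 = "nat \<Rightarrow> nat \<Rightarrow> complex"

definition fps2_add :: "fps2 \<Rightarrow> fps2 \<Rightarrow> fps2" where
  "fps2_add f g = (\<lambda>p q. f p q + g p q)"

definition fps2_mult :: "fps2 \<Rightarrow> fps2 \<Rightarrow> fps2" where
  "fps2_mult f g = (\<lambda>p q. \<Sum>i\<le>p. \<Sum>j\<le>q. f i j * g (p - i) (q - j))"

definition fps2_smult :: "complex \<Rightarrow> fps2 \<Rightarrow> fps2" where
  "fps2_smult c f = (\<lambda>p q. c * f p q)"

definition fps2_setsum :: "('i \<Rightarrow> fps2) \<Rightarrow> 'i set \<Rightarrow> fps2" where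
  "fps2_setsum f A = (\<lambda>p q. \<Sum>i\<in>A. f i p q)"

definition fps2_monom :: "nat \<Rightarrow> nat \<Rightarrow> fps2" where
  "fps2_monom k l = (\<lambda>p q. if p = k \<and> q = l then 1 else 0)"

text \<open>Convergence in the formal (degree) topology: the partial sums of the series
\<Sum>_{k\<ge>0} f k converge to S iff every coefficient of the partial sums is eventually
equal to the corresponding coefficient of S.\<close>
definition fps2_sums :: "(nat \<Rightarrow> fps2) \<Rightarrow> fps2 \<Rightarrow> bool" where
  "fps2_sums f S \<longleftrightarrow>
     (\<forall>p q. eventually (\<lambda>K. (\<Sum>k<K. f k p q) = S p q) sequentially)"

text \<open>Pochhammer symbol with integer index: (\<lambda>)_k = Gamma(\<lambda>+k)/Gamma(\<lambda>);
for k = -m < 0 this is 1/((\<lambda>-1)(\<lambda>-2)...(\<lambda>-m)).\<close>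
definition poch_int :: "complex \<Rightarrow> int \<Rightarrow> complex" where
  "poch_int z k = (if k \<ge> 0 then pochhammer z (nat k)
                   else inverse (pochhammer (z + of_int k) (nat (- k))))"

definition H11 :: "complex \<Rightarrow> complex \<Rightarrow> complex \<Rightarrow> complex \<Rightarrow> fps2" where
  "H11 a b c d = (\<lambda>p q. poch_int a (int p - int q) * pochhammer b q * pochhammer c q
                        / (pochhammer d p * fact p * fact q))"

definition hyp1F1_x :: "complex \<Rightarrow> complex \<Rightarrow> fps2" where
  "hyp1F1_x a c = (\<lambda>p q. if q = 0 then pochhammer a p / (pochhammer c p * fact p) else 0)"

definition hyp2F1_negy :: "complex \<Rightarrow> complex \<Rightarrow> complex \<Rightarrow> fps2" where
  "hyp2F1_negy a b c = (\<lambda>p q. if p = 0 then pochhammer a q * pochhammer b q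
                                   / (pochhammer c q * fact q) * (-1) ^ q else 0)"

end

theory Submission imports Defs begin
lemma pascal_sum:
  fixes h :: "nat \<Rightarrow> complex"
  shows "(\<Sum>k\<le>Suc p. of_nat (Suc p choose k) * h k) =
         (\<Sum>k\<le>Suc p. of_nat (p choose k) * h k) + (\<Sum>k\<le>p. of_nat (p choose k) * h (Suc k))"
proof -
  have "(\<Sum>k\<le>Suc p. of_nat (Suc p choose k) * h k) = h 0 + (\<Sum>k\<le>p. of_nat (Suc p choose Suc k) * h (Suc k))"
    by (subst sum.atMost_Suc_shift) simp
  also have "\<dots> = h 0 + (\<Sum>k\<le>p. of_nat (p choose Suc k) * h (Suc k)) + (\<Sum>k\<le>p. of_nat (p choose k) * h (Suc k))"
    by (simp add: sum.distrib algebra_simps)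
  also have "h 0 + (\<Sum>k\<le>p. of_nat (p choose Suc k) * h (Suc k)) = (\<Sum>k\<le>Suc p. of_nat (p choose k) * h k)"
    by (simp only: sum.atMost_Suc_shift) simp
  finally show ?thesis .
qed

lemma core:
  fixes a :: complex
  shows "(\<Sum>k\<le>p. (-1)^k * of_nat (p choose k) * pochhammer (of_nat q) k * pochhammer (a + of_nat k) (p - k))
         = pochhammer (a - of_nat q) p"
proof (induction p arbitrary: a)
  case 0
  then show ?case by simp
next
  case (Suc p)
  define g where "g k = (-1)^k * of_nat (p choose k) * pochhammer (of_nat q) k * pochhammer (a + 1 + of_nat k) (p - k)" for k
  define h where "h k = (-1)^k * pochhammer (of_nat q) k * pochhammer (a + of_nat k) (Suc p - k)" for k
  define A where "A = (\<Sum>k\<le>p. g k * (a + of_nat k))"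
  define B where "B = (\<Sum>k\<le>p. g k * (of_nat q + of_nat k))"
  have "pochhammer (a - of_nat q) (Suc p) = (a - of_nat q) * pochhammer (a + 1 - of_nat q) p"
    by (simp add: pochhammer_rec algebra_simps)
  also have "\<dots> = (a - of_nat q) * (\<Sum>k\<le>p. g k)"
    using Suc.IH[of "a+1"] by (simp add: g_def algebra_simps)
  also have "\<dots> = A - B"
    by (simp add: A_def B_def sum_distrib_left sum_subtractf[symmetric] algebra_simps)
  finally have 1: "pochhammer (a - of_nat q) (Suc p) = A + (- B)" by simp
  have "A = (\<Sum>k\<le>p. of_nat (p choose k) * h k)"
    unfolding A_def by (rule sum.cong) (auto simp: g_def h_def Suc_diff_le pochhammer_rec algebra_simps)
  also have "\<dots> = (\<Sum>k\<le>Suc p. of_nat (p choose k) * h k)"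
    by simp
  finally have 2: "A = (\<Sum>k\<le>Suc p. of_nat (p choose k) * h k)" .
  have 3: "- B = (\<Sum>k\<le>p. of_nat (p choose k) * h (Suc k))"
    unfolding B_def sum_negf[symmetric]
    by (rule sum.cong) (auto simp: g_def h_def pochhammer_rec' algebra_simps)
  have "(\<Sum>k\<le>Suc p. (-1)^k * of_nat (Suc p choose k) * pochhammer (of_nat q) k * pochhammer (a + of_nat k) (Suc p - k))
     = (\<Sum>k\<le>Suc p. of_nat (Suc p choose k) * h k)"
    by (rule sum.cong) (auto simp: h_def)
  also have "\<dots> = A + (- B)" using pascal_sum[of p h] 2 3 by simp
  finally show ?case using 1 by simp
qed
lemma vand1:
  assumes "k \<ge> 1"
  shows "(\<Sum>l\<in>{1..k}. ((k-1) choose (l-1)) * (q choose l)) = (q + (k-1)) choose k"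
proof -
  have "(q + (k-1)) choose k = (\<Sum>i\<le>k. (q choose i) * ((k-1) choose (k - i)))"
    by (rule vandermonde[symmetric])
  also have "\<dots> = (\<Sum>i\<in>{1..k}. (q choose i) * ((k-1) choose (k - i)))"
    using assms by (intro sum.mono_neutral_right) auto
  also have "\<dots> = (\<Sum>l\<in>{1..k}. ((k-1) choose (l-1)) * (q choose l))"
  proof (rule sum.cong)
    fix l assume "l \<in> {1..k}"
    then have "(k-1) choose (k - l) = (k-1) choose (l-1)"
      using binomial_symmetric[of "l-1" "k-1"] by auto
    then show "(q choose l) * ((k-1) choose (k - l)) = ((k-1) choose (l-1)) * (q choose l)" by simp
  qed simp
  finally show ?thesis by simp
qed

lemma poch_binom:
  assumes "k \<ge> 1"
  shows "pochhammer (of_nat q :: complex) k = fact k * of_nat ((q + (k-1)) choose k)"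
proof -
  have "of_nat ((q + (k-1)) choose k) = (of_nat (q + (k-1)) gchoose k :: complex)"
    by (rule binomial_gbinomial)
  also have "\<dots> = pochhammer (of_nat (q + (k-1)) - of_nat k + 1) k / fact k"
    by (rule gbinomial_pochhammer')
  also have "of_nat (q + (k-1)) - of_nat k + 1 = (of_nat q :: complex)"
    using assms by (simp add: of_nat_diff)
  finally show ?thesis by simp
qed
lemma monom_mult:
  "fps2_mult (fps2_monom k l) G p q = (if k \<le> p \<and> l \<le> q then G (p-k) (q-l) else 0)"
proof -
  have inner: "(\<Sum>j\<le>q. (if i = k \<and> j = l then 1 else 0) * G (p - i) (q - j)) =
     (if i = k \<and> l \<le> q then G (p - i) (q - l) else 0)" for i
  proof (cases "i = k")
    case True
    have "(\<Sum>j\<le>q. (if i = k \<and> j = l then 1 else 0) * G (p - i) (q - j)) = (\<Sum>j\<le>q. if j = l then G (p - i) (q - j) else 0)"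
      using True by (intro sum.cong) auto
    then show ?thesis using True by (simp add: sum.delta')
  qed simp
  have "fps2_mult (fps2_monom k l) G p q = (\<Sum>i\<le>p. if i = k then (if l \<le> q then G (p - i) (q - l) else 0) else 0)"
    unfolding fps2_mult_def fps2_monom_def using inner by (intro sum.cong) auto
  also have "\<dots> = (if k \<le> p \<and> l \<le> q then G (p-k) (q-l) else 0)"
    by (simp add: sum.delta')
  finally show ?thesis .
qed

lemma F_mult:
  "fps2_mult (hyp1F1_x \<alpha> \<delta>) (hyp2F1_negy \<beta> \<gamma> \<epsilon>) m n =
   pochhammer \<alpha> m / (pochhammer \<delta> m * fact m) *
   (pochhammer \<beta> n * pochhammer \<gamma> n / (pochhammer \<epsilon> n * fact n) * (-1) ^ n)"
proof -
  have "fps2_mult (hyp1F1_x \<alpha> \<delta>) (hyp2F1_negy \<beta> \<gamma> \<epsilon>) m n =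
     (\<Sum>i\<le>m. pochhammer \<alpha> i / (pochhammer \<delta> i * fact i) * hyp2F1_negy \<beta> \<gamma> \<epsilon> (m - i) n)"
    unfolding fps2_mult_def
  proof (intro sum.cong refl)
    fix i assume "i \<in> {..m}"
    have "(\<Sum>j\<le>n. hyp1F1_x \<alpha> \<delta> i j * hyp2F1_negy \<beta> \<gamma> \<epsilon> (m - i) (n - j)) =
       (\<Sum>j\<le>n. if j = 0 then pochhammer \<alpha> i / (pochhammer \<delta> i * fact i) * hyp2F1_negy \<beta> \<gamma> \<epsilon> (m - i) (n - j) else 0)"
      unfolding hyp1F1_x_def by (intro sum.cong) auto
    also have "\<dots> = pochhammer \<alpha> i / (pochhammer \<delta> i * fact i) * hyp2F1_negy \<beta> \<gamma> \<epsilon> (m - i) n"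
      by (simp add: sum.delta')
    finally show "(\<Sum>j\<le>n. hyp1F1_x \<alpha> \<delta> i j * hyp2F1_negy \<beta> \<gamma> \<epsilon> (m - i) (n - j)) = pochhammer \<alpha> i / (pochhammer \<delta> i * fact i) * hyp2F1_negy \<beta> \<gamma> \<epsilon> (m - i) n" .
  qed
  also have "\<dots> = (\<Sum>i\<le>m. if i = m then pochhammer \<alpha> i / (pochhammer \<delta> i * fact i) * hyp2F1_negy \<beta> \<gamma> \<epsilon> 0 n else 0)"
    by (rule sum.cong) (auto simp: hyp2F1_negy_def)
  also have "\<dots> = pochhammer \<alpha> m / (pochhammer \<delta> m * fact m) *
   (pochhammer \<beta> n * pochhammer \<gamma> n / (pochhammer \<epsilon> n * fact n) * (-1) ^ n)"
    by (simp add: hyp2F1_negy_def)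
  finally show ?thesis .
qed

lemma poch_int_rel:
  fixes a :: complex
  assumes "a \<notin> \<int>"
  shows "poch_int a (int p - int q) = (-1)^q * pochhammer (a - of_nat q) p / pochhammer (1 - a) q"
proof -
  have E: "pochhammer (a - of_nat q) q = (-1)^q * pochhammer (1 - a) q"
    using pochhammer_minus[of "of_nat q - a" q] by (simp add: algebra_simps)
  have nz: "pochhammer (z::complex) n \<noteq> 0" if "z \<notin> \<int>" for z n
    using that by (auto simp: pochhammer_eq_0_iff)
  have nzE: "pochhammer (1 - a) q \<noteq> 0"
  proof (rule nz)
    show "1 - a \<notin> \<int>"
    proof
      assume "1 - a \<in> \<int>"
      then have "1 - (1 - a) \<in> \<int>" by (intro Ints_diff) auto
      then show False using assms by simp
    qed
  qed
  have sq: "((-1::complex)^q) * (-1)^q = 1"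
    by (simp add: power_mult_distrib[symmetric])
  show ?thesis
  proof (cases "q \<le> p")
    case True
    have "pochhammer (a - of_nat q) p = pochhammer (a - of_nat q) q * pochhammer a (p - q)"
      using pochhammer_product[OF True, of "a - of_nat q"] by simp
    also have "\<dots> = (-1)^q * pochhammer (1 - a) q * pochhammer a (p - q)" using E by simp
    finally have X: "(-1)^q * pochhammer (a - of_nat q) p / pochhammer (1 - a) q = pochhammer a (p - q)"
      using nzE sq by (simp add: mult.assoc[symmetric])
    have "poch_int a (int p - int q) = pochhammer a (p - q)"
      using True by (simp add: poch_int_def nat_diff_distrib)
    then show ?thesis using X by simp
  next
    case False
    have Y: "pochhammer (a - of_nat q) q = pochhammer (a - of_nat q) p * pochhammer (a - of_nat q + of_nat p) (q - p)"
      using pochhammer_product[of p q "a - of_nat q"] False by simp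
    have nzY: "pochhammer (a - of_nat q + of_nat p) (q - p) \<noteq> 0"
    proof (rule nz)
      show "a - of_nat q + of_nat p \<notin> \<int>"
      proof
        assume "a - of_nat q + of_nat p \<in> \<int>"
        then have "(a - of_nat q + of_nat p) + of_nat q - of_nat p \<in> \<int>" by (intro Ints_diff Ints_add) auto
        then show False using assms by simp
      qed
    qed
    have Z: "poch_int a (int p - int q) = inverse (pochhammer (a - of_nat q + of_nat p) (q - p))"
      using False by (simp add: poch_int_def nat_diff_distrib algebra_simps)
    have W: "pochhammer (1 - a) q = (-1)^q * (pochhammer (a - of_nat q) p * pochhammer (a - of_nat q + of_nat p) (q - p))"
      using E Y sq by (metis (no_types, lifting) mult.assoc mult_1)
    then have nzP: "pochhammer (a - of_nat q) p \<noteq> 0" using nzE by auto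
    have "(-1)^q * pochhammer (a - of_nat q) p / pochhammer (1 - a) q = inverse (pochhammer (a - of_nat q + of_nat p) (q - p))"
      unfolding W using nzP nzY sq by (simp add: field_simps)
    then show ?thesis using Z by simp
  qed
qed
lemma field_id:
  fixes b1 b2 c1 c2 e1 e2 d1 d2 ak fk1 fl1 fl fkl fpk fql fp fq fk s1 s2 :: complex
  assumes nz: "e1 \<noteq> 0" "e2 \<noteq> 0" "d1 \<noteq> 0" "d2 \<noteq> 0" "fk1 \<noteq> 0" "fl1 \<noteq> 0" "fl \<noteq> 0" "fkl \<noteq> 0"
    "fpk \<noteq> 0" "fql \<noteq> 0" "fp \<noteq> 0" "fq \<noteq> 0" "fk \<noteq> 0"
  shows "s1 * s2 * fk1 / (fl1 * fl * fkl) * (b1 * c1 / (e1 * d1)) *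
     (ak / (d2 * fpk) * (b2 * c2 / (e2 * fql)))
   = b1 * b2 * (c1 * c2) / (e1 * e2 * (d1 * d2)) * (s2 / (fp * fq)) *
     (s1 * (fp / (fk * fpk)) * fk * (fk1 / (fl1 * fkl)) * (fq / (fl * fql)) * ak)"
  using nz by (simp add: field_simps)

lemma term_kl:
  fixes a b c d :: complex
  assumes a: "a \<notin> \<int>" and d: "\<forall>n::nat. d \<noteq> - of_nat n"
    and kl: "1 \<le> l" "l \<le> k" "k \<le> p"
  shows "fps2_smult
            ((-1) ^ (k + l) * fact (k - 1) / (fact (l - 1) * fact l * fact (k - l))
             * (pochhammer b l * pochhammer c l / (pochhammer (1 - a) l * pochhammer d k)))
            (fps2_mult (fps2_monom k l)
              (fps2_mult (hyp1F1_x (a + of_nat k) (d + of_nat k))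
                (hyp2F1_negy (b + of_nat l) (c + of_nat l) (1 - a + of_nat l)))) p q
    = pochhammer b q * pochhammer c q / (pochhammer (1 - a) q * pochhammer d p) * ((-1)^q / (fact p * fact q)) *
      ((-1)^k * of_nat (p choose k) * fact k * of_nat ((k-1) choose (l-1)) * of_nat (q choose l)
        * pochhammer (a + of_nat k) (p - k))"
proof (cases "l \<le> q")
  case False
  then show ?thesis by (simp add: fps2_smult_def monom_mult)
next
  case True
  have dnz: "pochhammer (d + of_nat j) n \<noteq> 0" for j n
  proof
    assume "pochhammer (d + of_nat j) n = 0"
    then obtain i where "d + of_nat j = - of_nat i" by (auto simp: pochhammer_eq_0_iff)
    then have "d = - of_nat (i + j)" by (simp add: algebra_simps)
    then show False using d by blast
  qed
  have anz: "pochhammer (1 - a + of_nat j) n \<noteq> 0" for j n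
  proof
    assume "pochhammer (1 - a + of_nat j) n = 0"
    then obtain i where "1 - a + of_nat j = - of_nat i" by (auto simp: pochhammer_eq_0_iff)
    then have "a = of_nat (1 + i + j)" by (simp add: algebra_simps)
    then show False using a by (metis Ints_of_nat)
  qed
  have pb: "pochhammer b q = pochhammer b l * pochhammer (b + of_nat l) (q - l)"
    using pochhammer_product[OF True] by blast
  have pc: "pochhammer c q = pochhammer c l * pochhammer (c + of_nat l) (q - l)"
    using pochhammer_product[OF True] by blast
  have pe: "pochhammer (1 - a) q = pochhammer (1 - a) l * pochhammer (1 - a + of_nat l) (q - l)"
    using pochhammer_product[OF True] by blast
  have pd: "pochhammer d p = pochhammer d k * pochhammer (d + of_nat k) (p - k)"
    using pochhammer_product[OF kl(3)] by blast
  have bk: "(of_nat ((k-1) choose (l-1)) :: complex) = fact (k-1) / (fact (l-1) * fact (k-l))"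
    using binomial_fact[of "l-1" "k-1", where 'a=complex] kl by simp
  have bp: "(of_nat (p choose k) :: complex) = fact p / (fact k * fact (p-k))"
    using binomial_fact[of k p] kl by simp
  have bq: "(of_nat (q choose l) :: complex) = fact q / (fact l * fact (q-l))"
    using binomial_fact[of l q] True by simp
  have sg: "(-1::complex) ^ (k + l) * (-1) ^ (q - l) = (-1)^k * (-1)^q"
    using True by (simp add: power_add[symmetric])
  have d0: "pochhammer d k \<noteq> 0" "pochhammer d p \<noteq> 0" using dnz[of 0] by auto
  have a0: "pochhammer (1 - a) l \<noteq> 0" "pochhammer (1 - a) q \<noteq> 0" using anz[of 0] by auto
  have lhs: "fps2_smult
            ((-1) ^ (k + l) * fact (k - 1) / (fact (l - 1) * fact l * fact (k - l))
             * (pochhammer b l * pochhammer c l / (pochhammer (1 - a) l * pochhammer d k)))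
            (fps2_mult (fps2_monom k l)
              (fps2_mult (hyp1F1_x (a + of_nat k) (d + of_nat k))
                (hyp2F1_negy (b + of_nat l) (c + of_nat l) (1 - a + of_nat l)))) p q
     = ((-1) ^ (k + l) * (-1) ^ (q - l)) * fact (k - 1) / (fact (l - 1) * fact l * fact (k - l))
             * (pochhammer b l * pochhammer c l / (pochhammer (1 - a) l * pochhammer d k)) *
        (pochhammer (a + of_nat k) (p - k) / (pochhammer (d + of_nat k) (p - k) * fact (p - k)) *
         (pochhammer (b + of_nat l) (q - l) * pochhammer (c + of_nat l) (q - l) /
           (pochhammer (1 - a + of_nat l) (q - l) * fact (q - l))))"
    using True kl by (simp add: fps2_smult_def monom_mult F_mult algebra_simps)
  show ?thesis
    unfolding lhs sg pb pc pe pd bk bp bq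
    by (rule field_id) (use dnz anz d0 a0 in auto)
qed

theorem mainTheorem12:
  fixes a b c d :: complex
  assumes "a \<notin> \<int>"
    and "\<forall>n::nat. d \<noteq> - of_nat n"
  shows "fps2_sums
     (\<lambda>k. if k = 0 then fps2_mult (hyp1F1_x a d) (hyp2F1_negy b c (1 - a))
          else fps2_setsum (\<lambda>l.
                  fps2_smult
                    ((-1) ^ (k + l) * fact (k - 1) / (fact (l - 1) * fact l * fact (k - l))
                     * (pochhammer b l * pochhammer c l / (pochhammer (1 - a) l * pochhammer d k)))
                    (fps2_mult (fps2_monom k l)
                      (fps2_mult (hyp1F1_x (a + of_nat k) (d + of_nat k))
                        (hyp2F1_negy (b + of_nat l) (c + of_nat l) (1 - a + of_nat l))))) {1..k})
     (H11 a b c d)" (is "fps2_sums ?T _")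
  unfolding fps2_sums_def
proof (intro allI)
  fix p q
  define Kc where "Kc = pochhammer b q * pochhammer c q / (pochhammer (1 - a) q * pochhammer d p) * ((-1)^q / (fact p * fact q))"
  define t where "t k = (-1)^k * of_nat (p choose k) * pochhammer (of_nat q) k * pochhammer (a + of_nat k) (p - k)" for k
  have d0: "pochhammer d p \<noteq> 0"
  proof
    assume "pochhammer d p = 0"
    then obtain i where "d = - of_nat i" by (auto simp: pochhammer_eq_0_iff)
    then show False using assms(2) by blast
  qed
  have a0: "pochhammer (1 - a) q \<noteq> 0"
  proof
    assume "pochhammer (1 - a) q = 0"
    then obtain i where "1 - a = - of_nat i" by (auto simp: pochhammer_eq_0_iff)
    then have "a = of_nat (1 + i)" by (simp add: algebra_simps)
    then show False using assms(1) by (metis Ints_of_nat)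
  qed
  have Tk: "?T k p q = Kc * t k" if kp: "k \<le> p" for k
  proof (cases "k = 0")
    case True
    then show ?thesis using d0 a0
      by (simp add: F_mult Kc_def t_def field_simps)
  next
    case False
    then have k1: "1 \<le> k" by simp
    have "?T k p q = (\<Sum>l\<in>{1..k}. Kc * ((-1)^k * of_nat (p choose k) * fact k * pochhammer (a + of_nat k) (p - k))
                 * (of_nat ((k-1) choose (l-1)) * of_nat (q choose l)))"
      by (simp only: if_not_P[OF False] fps2_setsum_def, intro sum.cong refl, subst term_kl[OF assms]) (use kp in \<open>auto simp: Kc_def algebra_simps\<close>)
    also have "\<dots> = Kc * ((-1)^k * of_nat (p choose k) * fact k * pochhammer (a + of_nat k) (p - k))
                 * of_nat (\<Sum>l\<in>{1..k}. ((k-1) choose (l-1)) * (q choose l))"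
      by (simp add: sum_distrib_left)
    also have "\<dots> = Kc * t k"
      unfolding vand1[OF k1] t_def poch_binom[OF k1] by (simp add: algebra_simps)
    finally show ?thesis .
  qed
  have Tbig: "?T k p q = 0" if "p < k" for k
    using that by (simp add: fps2_setsum_def fps2_smult_def monom_mult)
  show "\<forall>\<^sub>F K in sequentially. (\<Sum>k<K. ?T k p q) = H11 a b c d p q"
    unfolding eventually_sequentially
  proof (intro exI allI impI)
    fix K assume K: "Suc p \<le> K"
    have "(\<Sum>k<K. ?T k p q) = (\<Sum>k\<le>p. ?T k p q)"
      using K Tbig by (intro sum.mono_neutral_right) auto
    also have "\<dots> = Kc * (\<Sum>k\<le>p. t k)"
      using Tk by (simp add: sum_distrib_left)
    also have "(\<Sum>k\<le>p. t k) = pochhammer (a - of_nat q) p"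
      unfolding t_def by (rule core)
    also have "Kc * pochhammer (a - of_nat q) p = H11 a b c d p q"
      unfolding H11_def poch_int_rel[OF assms(1)] Kc_def using d0 a0
      by (simp add: field_simps)
    finally show "(\<Sum>k<K. ?T k p q) = H11 a b c d p q" .
  qed
qed

end
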